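(* Let $\mathcal{Q}^T=\mathrm{CSS}(\mathcal{C}_1,\mathcal{C}_2)$ be a T-triorthogonal $[[n,k,d]]$ code with $n-k\equiv 0\pmod 2$. Then there exists a binary linear code $\mathcal{C}\subseteq\mathbb{F}_2^n$ such that $\mathcal{Q}^{\rm Sym}=\mathrm{CSS}(\mathcal{C},\mathcal{C})$ is a symmetric CSS code and the pair $(\mathcal{Q}^T,\mathcal{Q}^{\rm Sym})$ is CNOT-transversal (with $\mathcal{Q}^T$ as control and $\mathcal{Q}^{\rm Sym}$ as target).
   Context: A binary matrix $\mathbf{G}=[G_{ij}]\in\mathbb{F}_2^{m\times n}$ is triorthogonal if $\sum_i G_{ai}G_{bi}=0\pmod 2$ for all rows $a\ne b$ and $\sum_i G_{ai}G_{bi}G_{ci}=0\pmod 2$ for all distinct rows $a,b,c$. Writing $\mathbf{G}=\begin{bmatrix}\mathbf{G}_1\\ \mathbf{G}_0\end{bmatrix}$ (rows assumed linearly independent) with $\mathbf{G}_1$ the $k$ odd-weight rows and $\mathbf{G}_0$ the even-weight rows, the triorthogonal code is $\mathcal{Q}^T=\mathrm{CSS}(\mathcal{C}_1,\mathcal{C}_2)$ with $\mathcal{C}_1$ generated by $\mathbf{G}$ and $\mathcal{C}_2$ the dual of the code generated by $\mathbf{G}_0$. For binary codes with $\mathcal{C}_b^\perp\subset\mathcal{C}_a$, $\mathrm{CSS}(\mathcal{C}_a,\mathcal{C}_b)$ is spanned by $|\bm{\psi}\rangle_L=|\mathcal{C}_b^\perp|^{-1/2}\sum_{\mathbf{y}\in\mathcal{C}_b^\perp}|\bm{\psi}\mathbf{A}+\mathbf{y}\rangle$,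 $\bm{\psi}\in\mathbb{F}_2^k$, where the mapping matrix $\mathbf{A}\in\mathbb{F}_2^{k\times n}$ has rows representing a basis of $\mathcal{C}_a/\mathcal{C}_b^\perp$ (for $\mathcal{Q}^T$, $\mathbf{A}=\mathbf{G}_1$). A CSS code is symmetric if $\mathcal{C}_a=\mathcal{C}_b$. $\mathcal{Q}^T$ is T-triorthogonal if it is Pauli $X$-transversal (applying $\mathbf{X}$ on every physical qubit implements logical $\mathbf{X}$ on every logical qubit); such codes are transversal for $\mathbf{T}=\mathrm{diag}(1,e^{i\pi/4})$. Two codes with $k$ logical qubits on $n$ physical qubits form a CNOT-transversal pair (control first, target second) if, for suitable mapping matrices defining their logical bases, applying physical CNOT from qubit $i$ of the first block to qubit $i$ of the second for all $i$ maps $|\bm{\psi}\rangle_L|\bm{\phi}\rangle_L\mapsto|\bm{\psi}\rangle_L|\bm{\psi}+\bm{\phi}\rangle_L$ for all $\bm{\psi},\bm{\phi}\in\mathbb{F}_2^k$. *)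

theory Defs
  imports Complex_Main
begin

text \<open>The field F2 is modelled by bool (True = 1, addition = xor,
  multiplication = conjunction). A vector of F2^n is a function nat => bool that
  vanishes outside the index range 0..n-1. A k x n binary matrix is given by its rows,
  a function nat => (nat => bool) whose rows 0..k-1 are used.
  Computational basis states of n qubits are labelled by vectors of F2^n; a pure
  state is its amplitude function (nat => bool) => complex.\<close>

definition F2vec :: "nat \<Rightarrow> (nat \<Rightarrow> bool) set" where
  "F2vec n = {x. \<forall>i. n \<le> i \<longrightarrow> \<not> x i}"

definition vzero :: "nat \<Rightarrow> bool" where
  "vzero = (\<lambda>i. False)"

definition vadd :: "(nat \<Rightarrow> bool) \<Rightarrow> (nat \<Rightarrow> bool) \<Rightarrow> (nat \<Rightarrow> bool)" where
  "vadd x y = (\<lambda>i. x i \<noteq> y i)"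

definition vones :: "nat \<Rightarrow> (nat \<Rightarrow> bool)" where
  "vones n = (\<lambda>i. i < n)"

definition weight :: "nat \<Rightarrow> (nat \<Rightarrow> bool) \<Rightarrow> nat" where
  "weight n x = card {i. i < n \<and> x i}"

definition dotF2 :: "nat \<Rightarrow> (nat \<Rightarrow> bool) \<Rightarrow> (nat \<Rightarrow> bool) \<Rightarrow> bool" where
  "dotF2 n x y = odd (card {i. i < n \<and> x i \<and> y i})"

text \<open>row vector times matrix: psi A for psi in F2^k and A with k rows\<close>
definition lincomb :: "nat \<Rightarrow> (nat \<Rightarrow> nat \<Rightarrow> bool) \<Rightarrow> (nat \<Rightarrow> bool) \<Rightarrow> (nat \<Rightarrow> bool)" where
  "lincomb k A psi = (\<lambda>j. odd (card {i. i < k \<and> psi i \<and> A i j}))"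

definition rowspace :: "nat \<Rightarrow> (nat \<Rightarrow> nat \<Rightarrow> bool) \<Rightarrow> (nat \<Rightarrow> bool) set" where
  "rowspace k A = {lincomb k A psi | psi. psi \<in> F2vec k}"

definition rows_independent :: "nat \<Rightarrow> (nat \<Rightarrow> nat \<Rightarrow> bool) \<Rightarrow> bool" where
  "rows_independent k A \<longleftrightarrow> (\<forall>psi \<in> F2vec k. lincomb k A psi = vzero \<longrightarrow> psi = vzero)"

definition lincode :: "nat \<Rightarrow> (nat \<Rightarrow> bool) set \<Rightarrow> bool" where
  "lincode n C \<longleftrightarrow> C \<subseteq> F2vec n \<and> vzero \<in> C \<and> (\<forall>x\<in>C. \<forall>y\<in>C. vadd x y \<in> C)"

definition dual :: "nat \<Rightarrow> (nat \<Rightarrow> bool) set \<Rightarrow> (nat \<Rightarrow> bool) set" where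
  "dual n C = {y \<in> F2vec n. \<forall>x\<in>C. \<not> dotF2 n x y}"

definition triorthogonal :: "nat \<Rightarrow> nat \<Rightarrow> (nat \<Rightarrow> nat \<Rightarrow> bool) \<Rightarrow> bool" where
  "triorthogonal m n G \<longleftrightarrow>
     (\<forall>a<m. \<forall>b<m. a \<noteq> b \<longrightarrow> even (card {i. i < n \<and> G a i \<and> G b i})) \<and>
     (\<forall>a<m. \<forall>b<m. \<forall>c<m. a \<noteq> b \<and> a \<noteq> c \<and> b \<noteq> c \<longrightarrow>
        even (card {i. i < n \<and> G a i \<and> G b i \<and> G c i}))"

definition stack :: "nat \<Rightarrow> (nat \<Rightarrow> nat \<Rightarrow> bool) \<Rightarrow> (nat \<Rightarrow> nat \<Rightarrow> bool) \<Rightarrow> (nat \<Rightarrow> nat \<Rightarrow> bool)" where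
  "stack k G1 G0 = (\<lambda>i. if i < k then G1 i else G0 (i - k))"

text \<open>A is a mapping matrix (k rows) for CSS(Ca,Cb): its rows represent a basis of
  Ca / Cb^perp.\<close>
definition mapping_matrix :: "nat \<Rightarrow> nat \<Rightarrow> (nat \<Rightarrow> bool) set \<Rightarrow> (nat \<Rightarrow> bool) set
    \<Rightarrow> (nat \<Rightarrow> nat \<Rightarrow> bool) \<Rightarrow> bool" where
  "mapping_matrix n k Ca Cb A \<longleftrightarrow>
     (\<forall>i<k. A i \<in> Ca) \<and>
     (\<forall>psi \<in> F2vec k. lincomb k A psi \<in> dual n Cb \<longrightarrow> psi = vzero) \<and>
     (\<forall>x\<in>Ca. \<exists>psi \<in> F2vec k. vadd x (lincomb k A psi) \<in> dual n Cb)"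

text \<open>logical basis state |psi>_L of CSS(Ca,Cb) w.r.t. mapping matrix A (k rows):
  |Cb^perp|^(-1/2) * sum over y in Cb^perp of |psi A + y>\<close>
definition css_state :: "nat \<Rightarrow> nat \<Rightarrow> (nat \<Rightarrow> bool) set \<Rightarrow> (nat \<Rightarrow> nat \<Rightarrow> bool)
    \<Rightarrow> (nat \<Rightarrow> bool) \<Rightarrow> ((nat \<Rightarrow> bool) \<Rightarrow> complex)" where
  "css_state n k Cb A psi = (\<lambda>x.
     if x \<in> {vadd (lincomb k A psi) y | y. y \<in> dual n Cb}
     then complex_of_real (1 / sqrt (real (card (dual n Cb)))) else 0)"

text \<open>Pauli X on every physical qubit of an n-qubit block\<close>
definition X_all :: "nat \<Rightarrow> ((nat \<Rightarrow> bool) \<Rightarrow> complex) \<Rightarrow> ((nat \<Rightarrow> bool) \<Rightarrow> complex)" where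
  "X_all n f = (\<lambda>x. f (vadd x (vones n)))"

definition tensor :: "((nat \<Rightarrow> bool) \<Rightarrow> complex) \<Rightarrow> ((nat \<Rightarrow> bool) \<Rightarrow> complex)
    \<Rightarrow> ((nat \<Rightarrow> bool) \<times> (nat \<Rightarrow> bool) \<Rightarrow> complex)" where
  "tensor f g = (\<lambda>(x, y). f x * g y)"

text \<open>transversal CNOT (qubit i of block 1 controls qubit i of block 2, for all i):
  |x>|y> goes to |x>|x+y>, so the amplitude of |x>|y> afterwards is the old amplitude of |x>|x+y>\<close>
definition cnot_transversal :: "((nat \<Rightarrow> bool) \<times> (nat \<Rightarrow> bool) \<Rightarrow> complex)
    \<Rightarrow> ((nat \<Rightarrow> bool) \<times> (nat \<Rightarrow> bool) \<Rightarrow> complex)" where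
  "cnot_transversal F = (\<lambda>(x, y). F (x, vadd x y))"

end

theory Submission
  imports Defs
begin
definition par :: "nat \<Rightarrow> (nat \<Rightarrow> bool) \<Rightarrow> bool" where
  "par k P = odd (card {i. i < k \<and> P i})"

lemma par_0[simp]: "par 0 P = False"
  by (simp add: par_def)

lemma par_Suc[simp]: "par (Suc k) P = (par k P \<noteq> P k)"
proof (cases "P k")
  case True
  have "{i. i < Suc k \<and> P i} = insert k {i. i < k \<and> P i}" using True by auto
  then show ?thesis using True by (simp add: par_def)
next
  case False
  have "{i. i < Suc k \<and> P i} = {i. i < k \<and> P i}" using False less_Suc_eq by auto
  then show ?thesis using False by (simp add: par_def)
qed

lemma par_xor: "par k (\<lambda>i. P i \<noteq> Q i) = (par k P \<noteq> par k Q)"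
  by (induction k) auto

lemma par_and: "par k (\<lambda>i. b \<and> P i) = (b \<and> par k P)"
  by (induction k) auto

lemma par_swap: "par n (\<lambda>j. par k (\<lambda>i. P i j)) = par k (\<lambda>i. par n (\<lambda>j. P i j))"
proof (induction k)
  case 0 then show ?case by (simp add: par_def)
next
  case (Suc k)
  have "par n (\<lambda>j. par (Suc k) (\<lambda>i. P i j)) = par n (\<lambda>j. par k (\<lambda>i. P i j) \<noteq> P k j)" by simp
  also have "\<dots> = (par n (\<lambda>j. par k (\<lambda>i. P i j)) \<noteq> par n (P k))" by (rule par_xor)
  finally show ?case using Suc by simp
qed

lemma par_cong: "(\<And>i. i < k \<Longrightarrow> P i = Q i) \<Longrightarrow> par k P = par k Q"
  unfolding par_def by (metis (mono_tags, lifting) Collect_cong)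

lemma par_False: "(\<And>i. i < k \<Longrightarrow> \<not> P i) \<Longrightarrow> \<not> par k P"
  unfolding par_def by (metis (mono_tags, lifting) Collect_empty_eq card.empty even_zero)

lemma par_single: "j < k \<Longrightarrow> par k (\<lambda>i. P i \<and> i = j) = P j"
proof -
  assume j: "j < k"
  have "{i. i < k \<and> P i \<and> i = j} = (if P j then {j} else {})" using j by auto
  then show ?thesis unfolding par_def by simp
qed

lemma par_add: "par (k + r) P = (par k P \<noteq> par r (\<lambda>i. P (k + i)))"
  by (induction r) auto

lemma dot_par: "dotF2 n x y = par n (\<lambda>i. x i \<and> y i)"
  by (simp add: dotF2_def par_def)

lemma lincomb_par: "lincomb k A psi j = par k (\<lambda>i. psi i \<and> A i j)"
  by (simp add: lincomb_def par_def)

lemma dot_sym: "dotF2 n x y = dotF2 n y x"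
  unfolding dotF2_def by (metis (mono_tags, lifting) Collect_cong)

lemma dot_vadd: "dotF2 n x (vadd y z) = (dotF2 n x y \<noteq> dotF2 n x z)"
proof -
  have "dotF2 n x (vadd y z) = par n (\<lambda>i. (x i \<and> y i) \<noteq> (x i \<and> z i))"
    unfolding dot_par by (rule par_cong) (auto simp: vadd_def)
  also have "\<dots> = (dotF2 n x y \<noteq> dotF2 n x z)" unfolding dot_par by (rule par_xor)
  finally show ?thesis .
qed

lemma dot_lincomb: "dotF2 n x (lincomb k A psi) = par k (\<lambda>i. psi i \<and> dotF2 n x (A i))"
proof -
  have "dotF2 n x (lincomb k A psi) = par n (\<lambda>j. x j \<and> par k (\<lambda>i. psi i \<and> A i j))"
    by (simp add: dot_par lincomb_par)
  also have "\<dots> = par n (\<lambda>j. par k (\<lambda>i. psi i \<and> (x j \<and> A i j)))"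
    by (simp add: par_and[symmetric] conj_left_commute)
  also have "\<dots> = par k (\<lambda>i. par n (\<lambda>j. psi i \<and> (x j \<and> A i j)))" by (rule par_swap)
  also have "\<dots> = par k (\<lambda>i. psi i \<and> dotF2 n x (A i))"
    by (simp add: par_and dot_par)
  finally show ?thesis .
qed

lemma lincomb_vadd: "lincomb k A (vadd psi phi) = vadd (lincomb k A psi) (lincomb k A phi)"
proof (rule ext)
  fix j
  have "lincomb k A (vadd psi phi) j = par k (\<lambda>i. (psi i \<and> A i j) \<noteq> (phi i \<and> A i j))"
    unfolding lincomb_par by (rule par_cong) (auto simp: vadd_def)
  also have "\<dots> = vadd (lincomb k A psi) (lincomb k A phi) j"
    unfolding lincomb_par vadd_def by (rule par_xor)
  finally show "lincomb k A (vadd psi phi) j = vadd (lincomb k A psi) (lincomb k A phi) j" .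
qed

lemma lincomb_zero[simp]: "lincomb k A vzero = vzero"
  by (simp add: fun_eq_iff lincomb_def vzero_def)

lemma lincomb_F2vec: "(\<And>i. i < k \<Longrightarrow> A i \<in> F2vec n) \<Longrightarrow> lincomb k A psi \<in> F2vec n"
  unfolding F2vec_def lincomb_par by (auto intro!: par_False)

lemma lincomb_cong: "(\<And>i. i < k \<Longrightarrow> psi i = phi i) \<Longrightarrow> lincomb k A psi = lincomb k A phi"
  unfolding fun_eq_iff lincomb_par by (auto intro!: par_cong)

lemma lincomb_stack: "lincomb (k + r) (stack k G1 G0) phi
   = vadd (lincomb k G1 phi) (lincomb r G0 (\<lambda>i. phi (k + i)))"
proof (rule ext)
  fix j
  have "lincomb (k + r) (stack k G1 G0) phi j
     = (par k (\<lambda>i. phi i \<and> stack k G1 G0 i j) \<noteq> par r (\<lambda>i. phi (k+i) \<and> stack k G1 G0 (k+i) j))"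
    unfolding lincomb_par by (rule par_add)
  also have "par k (\<lambda>i. phi i \<and> stack k G1 G0 i j) = par k (\<lambda>i. phi i \<and> G1 i j)"
    by (rule par_cong) (simp add: stack_def)
  also have "par r (\<lambda>i. phi (k+i) \<and> stack k G1 G0 (k+i) j) = par r (\<lambda>i. phi (k+i) \<and> G0 i j)"
    by (rule par_cong) (simp add: stack_def)
  finally show "lincomb (k + r) (stack k G1 G0) phi j
   = vadd (lincomb k G1 phi) (lincomb r G0 (\<lambda>i. phi (k + i))) j"
    by (simp add: vadd_def lincomb_par)
qed

lemma lincomb_unit: "i < k \<Longrightarrow> lincomb k A (\<lambda>j. j = i) = A i"
proof -
  assume i: "i < k"
  have "\<And>l. (\<lambda>j. j = i \<and> A j l) = (\<lambda>j. A j l \<and> j = i)" by auto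
  then show ?thesis using i by (simp add: fun_eq_iff lincomb_par par_single)
qed

lemma dual_anti: "A \<subseteq> B \<Longrightarrow> dual n B \<subseteq> dual n A"
  unfolding dual_def by auto

lemma dual_sub: "dual n C \<subseteq> F2vec n"
  unfolding dual_def by auto

lemma sub_dual_dual: "C \<subseteq> F2vec n \<Longrightarrow> C \<subseteq> dual n (dual n C)"
  unfolding dual_def using dot_sym by blast

lemma vadd_F2vec: "x \<in> F2vec n \<Longrightarrow> y \<in> F2vec n \<Longrightarrow> vadd x y \<in> F2vec n"
  by (simp add: F2vec_def vadd_def)

lemma dual_vadd: "x \<in> dual n C \<Longrightarrow> y \<in> dual n C \<Longrightarrow> vadd x y \<in> dual n C"
  unfolding dual_def by (auto simp: vadd_F2vec dot_vadd)

lemma vzero_dual: "vzero \<in> dual n C"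
  unfolding dual_def F2vec_def dotF2_def vzero_def by simp

lemma finite_F2vec: "finite (F2vec n)"
proof -
  have "F2vec n \<subseteq> (\<lambda>S i. i \<in> S) ` Pow {..<n}"
  proof
    fix x assume x: "x \<in> F2vec n"
    have "x = (\<lambda>i. i \<in> {i. i < n \<and> x i})" using x by (auto simp: F2vec_def fun_eq_iff not_le[symmetric])
    then show "x \<in> (\<lambda>S i. i \<in> S) ` Pow {..<n}" by blast
  qed
  then show ?thesis by (rule finite_subset) simp
qed

lemma vadd_vadd[simp]: "vadd a (vadd a z) = z"
  unfolding vadd_def fun_eq_iff by blast

lemma vadd_zero_left[simp]: "vadd vzero x = x"
  by (simp add: vadd_def vzero_def)

lemma vadd_self[simp]: "vadd x x = vzero"
  by (simp add: vadd_def vzero_def)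

lemma mem_coset: "(w \<in> {vadd a z |z. z \<in> E}) = (vadd a w \<in> E)"
  by (auto, metis vadd_vadd)

theorem theorem2:
  fixes n k r :: nat
    and G1 G0 :: "nat \<Rightarrow> nat \<Rightarrow> bool"
  assumes rows_in: "\<forall>i<k + r. stack k G1 G0 i \<in> F2vec n"
    and indep: "rows_independent (k + r) (stack k G1 G0)"
    and trio: "triorthogonal (k + r) n (stack k G1 G0)"
    and G1_odd: "\<forall>i<k. odd (weight n (G1 i))"
    and G0_even: "\<forall>i<r. even (weight n (G0 i))"
    and T_trio: "\<forall>psi \<in> F2vec k.
        X_all n (css_state n k (dual n (rowspace r G0)) G1 psi)
        = css_state n k (dual n (rowspace r G0)) G1 (vadd psi (vones k))"
    and parity: "even (n - k)"
  shows "\<exists>C. lincode n C \<and> dual n C \<subseteq> C \<and>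
     (\<exists>A A'. mapping_matrix n k (rowspace (k + r) (stack k G1 G0)) (dual n (rowspace r G0)) A \<and>
             mapping_matrix n k C C A' \<and>
             (\<forall>psi \<in> F2vec k. \<forall>phi \<in> F2vec k.
                cnot_transversal
                  (tensor (css_state n k (dual n (rowspace r G0)) A psi) (css_state n k C A' phi))
                = tensor (css_state n k (dual n (rowspace r G0)) A psi)
                         (css_state n k C A' (vadd psi phi))))"
proof -
  define S where "S = stack k G1 G0"
  define R0 where "R0 = rowspace r G0"
  have G1F: "G1 i \<in> F2vec n" if "i < k" for i
    using rows_in[rule_format, of i] that by (auto simp: stack_def)
  have G0F: "G0 i \<in> F2vec n" if "i < r" for i
    using rows_in[rule_format, of "k + i"] that by (auto simp: stack_def)
  have pairs: "\<not> dotF2 n (S a) (S b)" if "a < k + r" "b < k + r" "a \<noteq> b" for a b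
    using trio that unfolding triorthogonal_def dotF2_def S_def by blast
  have dotself: "dotF2 n x x = odd (weight n x)" for x
    by (simp add: dotF2_def weight_def)
  have g11: "dotF2 n (G1 i) (G1 j) = (i = j)" if "i < k" "j < k" for i j
  proof (cases "i = j")
    case True then show ?thesis using G1_odd that by (simp add: dotself)
  next
    case False then show ?thesis using pairs[of i j] that by (simp add: S_def stack_def)
  qed
  have g10: "\<not> dotF2 n (G1 i) (G0 j)" if "i < k" "j < r" for i j
    using pairs[of i "k + j"] that by (simp add: S_def stack_def)
  have g00: "\<not> dotF2 n (G0 i) (G0 j)" if "i < r" "j < r" for i j
  proof (cases "i = j")
    case True then show ?thesis using G0_even that by (simp add: dotself)
  next
    case False then show ?thesis using pairs[of "k + i" "k + j"] that by (simp add: S_def stack_def)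
  qed
  have R0F: "R0 \<subseteq> F2vec n"
    unfolding R0_def rowspace_def using G0F lincomb_F2vec by blast
  have R0G1: "\<not> dotF2 n (G1 j) a" if "a \<in> R0" "j < k" for a j
  proof -
    obtain phi where a: "a = lincomb r G0 phi" using \<open>a \<in> R0\<close> unfolding R0_def rowspace_def by blast
    show ?thesis unfolding a dot_lincomb by (rule par_False) (use g10 that in auto)
  qed
  have R0R0: "\<not> dotF2 n a b" if "a \<in> R0" "b \<in> R0" for a b
  proof -
    obtain phi where a: "a = lincomb r G0 phi" using \<open>a \<in> R0\<close> unfolding R0_def rowspace_def by blast
    obtain phi' where b: "b = lincomb r G0 phi'" using \<open>b \<in> R0\<close> unfolding R0_def rowspace_def by blast
    have "\<not> dotF2 n (G0 i) a" if "i < r" for i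
      unfolding a dot_lincomb by (rule par_False) (use g00 that in auto)
    then show ?thesis unfolding b dot_lincomb by (intro par_False) (auto simp: dot_sym)
  qed
  have indepG1: "psi = vzero"
    if E: "\<And>j. j < k \<Longrightarrow> G1 j \<in> E" and psi: "psi \<in> F2vec k"
      and l: "lincomb k G1 psi \<in> dual n E" for E psi
  proof (rule ext)
    fix j
    show "psi j = vzero j"
    proof (cases "j < k")
      case True
      have "\<not> dotF2 n (G1 j) (lincomb k G1 psi)" using l E[OF True] unfolding dual_def by blast
      moreover have "dotF2 n (G1 j) (lincomb k G1 psi) = par k (\<lambda>i. psi i \<and> i = j)"
        unfolding dot_lincomb by (rule par_cong) (use g11 True in auto)
      ultimately show ?thesis using par_single[OF True, of psi] by (simp add: vzero_def)
    next
      case False then show ?thesis using psi by (simp add: F2vec_def vzero_def)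
    qed
  qed
  \<comment> \<open>consequence of T-transversality\<close>
  define x0 where "x0 = lincomb k G1 (vones k)"
  have w: "vadd x0 (vones n) \<in> dual n (dual n R0)"
  proof -
    have vz: "vzero \<in> F2vec k" by (simp add: F2vec_def vzero_def)
    have fin: "finite (dual n (dual n R0))" by (rule finite_subset[OF dual_sub finite_F2vec])
    have "card (dual n (dual n R0)) > 0" using fin vzero_dual card_gt_0_iff by blast
    then have c: "complex_of_real (1 / sqrt (real (card (dual n (dual n R0))))) \<noteq> 0" by simp
    have eq: "X_all n (css_state n k (dual n R0) G1 vzero) x0 = css_state n k (dual n R0) G1 (vones k) x0"
      using T_trio[rule_format, OF vz] unfolding R0_def vadd_zero_left by simp
    have "x0 \<in> {vadd (lincomb k G1 (vones k)) z |z. z \<in> dual n (dual n R0)}"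
      unfolding mem_coset x0_def vadd_self by (rule vzero_dual)
    then have "css_state n k (dual n R0) G1 (vones k) x0 \<noteq> 0"
      unfolding css_state_def using c by simp
    then have ne: "css_state n k (dual n R0) G1 vzero (vadd x0 (vones n)) \<noteq> 0"
      using eq unfolding X_all_def by simp
    show ?thesis
    proof (rule ccontr)
      assume "vadd x0 (vones n) \<notin> dual n (dual n R0)"
      then have "vadd x0 (vones n) \<notin> {vadd (lincomb k G1 vzero) z |z. z \<in> dual n (dual n R0)}"
        by auto
      then show False using ne unfolding css_state_def by simp
    qed
  qed
  \<comment> \<open>maximal self-orthogonal extension\<close>
  define Fam where "Fam = {D. R0 \<subseteq> D \<and> D \<subseteq> F2vec n \<and> (\<forall>a\<in>D. \<forall>b\<in>D. \<not> dotF2 n a b)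
      \<and> (\<forall>a\<in>D. \<forall>j<k. \<not> dotF2 n (G1 j) a)}"
  have finFam: "finite Fam"
    by (rule finite_subset[of _ "Pow (F2vec n)"]) (auto simp: Fam_def finite_F2vec)
  have R0Fam: "R0 \<in> Fam" unfolding Fam_def using R0F R0R0 R0G1 by blast
  have "Max (card ` Fam) \<in> card ` Fam" using finFam R0Fam by (intro Max_in) auto
  then obtain D where DF: "D \<in> Fam" and Dmax: "card D = Max (card ` Fam)" by auto
  have R0D: "R0 \<subseteq> D" and DF2: "D \<subseteq> F2vec n" and DD: "\<forall>a\<in>D. \<forall>b\<in>D. \<not> dotF2 n a b"
    and DG1: "\<forall>a\<in>D. \<forall>j<k. \<not> dotF2 n (G1 j) a" using DF by (auto simp: Fam_def)
  have finD: "finite D" by (rule finite_subset[OF DF2 finite_F2vec])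
  have maxD: "y \<in> D" if "y \<in> F2vec n" "\<forall>a\<in>D. \<not> dotF2 n a y" "\<not> dotF2 n y y"
      "\<forall>j<k. \<not> dotF2 n (G1 j) y" for y
  proof (rule ccontr)
    assume ny: "y \<notin> D"
    have "insert y D \<in> Fam" using DF that unfolding Fam_def by (auto simp: dot_sym)
    then have "card (insert y D) \<le> card D" unfolding Dmax using finFam by simp
    then show False using ny finD by simp
  qed
  define C where "C = dual n D"
  have DsubC: "D \<subseteq> C" unfolding C_def dual_def using DF2 DD by blast
  have CsubR: "C \<subseteq> dual n R0" unfolding C_def by (rule dual_anti[OF R0D])
  have G1C: "G1 j \<in> C" if "j < k" for j
    unfolding C_def dual_def using G1F[OF that] DG1 that by (auto simp: dot_sym)
  have G1R: "G1 j \<in> dual n R0" if "j < k" for j using G1C CsubR that by blast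
  have DDC: "D \<subseteq> dual n C" unfolding C_def by (rule sub_dual_dual[OF DF2])
  have lin: "lincode n C" unfolding lincode_def C_def
    using dual_sub vzero_dual dual_vadd by blast
  have selfd: "dual n C \<subseteq> C" unfolding C_def by (rule dual_anti[OF DsubC[unfolded C_def]])
  have mm1: "mapping_matrix n k (rowspace (k + r) S) (dual n R0) G1"
    unfolding mapping_matrix_def
  proof (intro conjI ballI allI impI)
    fix i assume i: "i < k"
    have "(\<lambda>j. j = i) \<in> F2vec (k + r)" using i by (auto simp: F2vec_def)
    moreover have "lincomb (k + r) S (\<lambda>j. j = i) = G1 i"
      using i lincomb_unit[of i "k + r" S] by (simp add: S_def stack_def)
    ultimately show "G1 i \<in> rowspace (k + r) S" unfolding rowspace_def by force
  next
    fix psi assume "psi \<in> F2vec k" "lincomb k G1 psi \<in> dual n (dual n R0)"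
    then show "psi = vzero" using indepG1[of "dual n R0" psi] G1R by blast
  next
    fix x assume "x \<in> rowspace (k + r) S"
    then obtain phi where x: "x = lincomb (k + r) S phi" unfolding rowspace_def by blast
    define psi where "psi = (\<lambda>i. i < k \<and> phi i)"
    define phi' where "phi' = (\<lambda>i. i < r \<and> phi (k + i))"
    have psiF: "psi \<in> F2vec k" by (simp add: psi_def F2vec_def)
    have "lincomb k G1 psi = lincomb k G1 phi" by (rule lincomb_cong) (simp add: psi_def)
    moreover have "lincomb r G0 (\<lambda>i. phi (k + i)) = lincomb r G0 phi'"
      by (rule lincomb_cong) (simp add: phi'_def)
    ultimately have "vadd x (lincomb k G1 psi) = lincomb r G0 phi'"
      unfolding x S_def lincomb_stack unfolding vadd_def fun_eq_iff by auto
    moreover have "lincomb r G0 phi' \<in> R0" unfolding R0_def rowspace_def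
      by (auto simp: phi'_def F2vec_def)
    ultimately have "vadd x (lincomb k G1 psi) \<in> dual n (dual n R0)"
      using sub_dual_dual[OF R0F] by auto
    then show "\<exists>psi\<in>F2vec k. vadd x (lincomb k G1 psi) \<in> dual n (dual n R0)" using psiF by blast
  qed
  have mm2: "mapping_matrix n k C C G1"
    unfolding mapping_matrix_def
  proof (intro conjI ballI allI impI)
    fix i assume "i < k" then show "G1 i \<in> C" by (rule G1C)
  next
    fix psi assume "psi \<in> F2vec k" "lincomb k G1 psi \<in> dual n C"
    then show "psi = vzero" using indepG1[of C psi] G1C by blast
  next
    fix x assume xC: "x \<in> C"
    define psi where "psi = (\<lambda>j. j < k \<and> dotF2 n (G1 j) x)"
    define y where "y = vadd x (lincomb k G1 psi)"
    have psiF: "psi \<in> F2vec k" by (simp add: psi_def F2vec_def)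
    have xF: "x \<in> F2vec n" using xC dual_sub unfolding C_def by blast
    have yF: "y \<in> F2vec n" unfolding y_def using xF G1F lincomb_F2vec vadd_F2vec by blast
    have yD: "\<not> dotF2 n a y" if "a \<in> D" for a
    proof -
      have "\<not> dotF2 n a x" using xC that unfolding C_def dual_def by blast
      moreover have "\<not> dotF2 n a (lincomb k G1 psi)" unfolding dot_lincomb
        by (rule par_False) (use DG1 that in \<open>auto simp: dot_sym\<close>)
      ultimately show ?thesis by (simp add: y_def dot_vadd)
    qed
    have yG: "\<not> dotF2 n (G1 j) y" if j: "j < k" for j
    proof -
      have "dotF2 n (G1 j) (lincomb k G1 psi) = par k (\<lambda>i. psi i \<and> i = j)"
        unfolding dot_lincomb by (rule par_cong) (use g11 j in auto)
      also have "\<dots> = psi j" by (rule par_single[OF j])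
      finally show ?thesis using j by (simp add: y_def dot_vadd psi_def)
    qed
    have yC: "y \<in> C" unfolding C_def dual_def using yF yD by blast
    have "\<not> dotF2 n y (vadd x0 (vones n))"
      using w yC CsubR unfolding dual_def by blast
    moreover have "\<not> dotF2 n y x0" unfolding x0_def dot_lincomb
      by (rule par_False) (use yG in \<open>auto simp: dot_sym\<close>)
    ultimately have "\<not> dotF2 n y (vones n)" by (simp add: dot_vadd)
    moreover have "dotF2 n y (vones n) = dotF2 n y y"
      unfolding dotF2_def vones_def by (metis (mono_tags, lifting) Collect_cong)
    ultimately have "y \<in> D" using maxD yF yD yG by auto
    then have "vadd x (lincomb k G1 psi) \<in> dual n C" using DDC y_def by blast
    then show "\<exists>psi\<in>F2vec k. vadd x (lincomb k G1 psi) \<in> dual n C" using psiF by blast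
  qed
  have cnot: "cnot_transversal
                  (tensor (css_state n k (dual n R0) G1 psi) (css_state n k C G1 phi))
                = tensor (css_state n k (dual n R0) G1 psi)
                         (css_state n k C G1 (vadd psi phi))" for psi phi
  proof (rule ext, clarify)
    fix x y
    show "cnot_transversal (tensor (css_state n k (dual n R0) G1 psi) (css_state n k C G1 phi)) (x, y)
      = tensor (css_state n k (dual n R0) G1 psi) (css_state n k C G1 (vadd psi phi)) (x, y)"
    proof (cases "vadd (lincomb k G1 psi) x \<in> dual n (dual n R0)")
      case False
      then show ?thesis unfolding cnot_transversal_def tensor_def css_state_def mem_coset by simp
    next
      case True
      then have z: "vadd (lincomb k G1 psi) x \<in> dual n C"
        using dual_anti[OF CsubR] by blast
      have "(vadd (lincomb k G1 phi) (vadd x y) \<in> dual n C)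
          = (vadd (lincomb k G1 (vadd psi phi)) y \<in> dual n C)"
      proof -
        have e: "vadd (lincomb k G1 phi) (vadd x y)
           = vadd (vadd (lincomb k G1 psi) x) (vadd (lincomb k G1 (vadd psi phi)) y)"
          unfolding lincomb_vadd by (simp add: vadd_def fun_eq_iff) blast
        show ?thesis unfolding e
        proof
          assume "vadd (vadd (lincomb k G1 psi) x) (vadd (lincomb k G1 (vadd psi phi)) y) \<in> dual n C"
          from dual_vadd[OF z this] show "vadd (lincomb k G1 (vadd psi phi)) y \<in> dual n C" by simp
        next
          assume "vadd (lincomb k G1 (vadd psi phi)) y \<in> dual n C"
          from dual_vadd[OF z this]
          show "vadd (vadd (lincomb k G1 psi) x) (vadd (lincomb k G1 (vadd psi phi)) y) \<in> dual n C" .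
        qed
      qed
      then show ?thesis unfolding cnot_transversal_def tensor_def css_state_def mem_coset by simp
    qed
  qed
  show ?thesis
    unfolding S_def[symmetric] R0_def[symmetric]
    by (intro exI[of _ C] conjI lin selfd exI[of _ G1] mm1 mm2 ballI cnot)
qed

end
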